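(* Let $G=(V,E)$ be a strongly connected digraph with $V=\{v_1,\dots,v_n\}$. Then every evolution of the weight-balancing mirror algorithm, i.e., every sequence $(A_k)_{k\geq0}$ with $A_0\in\operatorname{Adj}(G)$ and $A_{k+1}\in g_{\mathrm{imcor}}(A_k)$ for all $k$ in which the choices satisfy the fair-decision rule, converges in finite time to a weight-balanced adjacency matrix: there exists $K$ such that $A_K$ is weight-balanced and $A_k=A_K$ for all $k\geq K$.
   Context: A digraph $G=(V,E)$ has finite vertex set $V$ and edge set $E\subseteq V\times V$; it is strongly connected if there is a directed path between every ordered pair of distinct vertices. $\mathcal{N}^{\mathrm{out}}(v_i)=\{v_j:(v_i,v_j)\in E\}$. $\operatorname{Adj}(G)$ is the set of matrices $A=(a_{ij})\in\mathbb{R}^{n\times n}_{\geq0}$ with $a_{ij}>0$ if $(v_i,v_j)\in E$ and $a_{ij}=0$ otherwise. For $A\in\operatorname{Adj}(G)$, the imbalance of $v_i$ is $\omega(v_i)=\sum_j a_{ji}-\sum_j a_{ij}$; $A$ is weight-balanced if all imbalances are zero. Let $\Omega_{\min}(v_i)=\{v_j\in\mathcal{N}^{\mathrm{out}}(v_i):\omega(v_j)=\min_{v_l\in\mathcal{N}^{\mathrm{out}}(v_i)}\omega(v_l)\}$. The map $g_{\mathrm{imcor}}:\operatorname{Adj}(G)\rightrightarrows\operatorname{Adj}(G)$ assigns to $A$ the set of all $B\in\operatorname{Adj}(G)$ such that for each $i$ there exists $j^*$ with $v_{j^*}\in\Omega_{\min}(v_i)$ and $b_{ij}=a_{ij}+\omega(v_i)$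 if $\omega(v_i)>0$ and $j=j^*$, $b_{ij}=a_{ij}$ otherwise (imbalances computed w.r.t. $A$). Fair-decision rule: when an agent with positive imbalance has more than one out-neighbor attaining the minimum imbalance, it chooses one of them, but the next time it must choose among out-neighbors with the same minimum imbalance it chooses a different (new) out-neighbor. *)

theory Defs
  imports Complex_Main
begin

text \<open>Vertices v_1..v_n are represented by the indices 0..n-1; a digraph is an edge
  relation E on {..<n}; a matrix is a function nat => nat => real (entries outside
  the index range are required to be 0).\<close>

definition strongly_connected :: "nat \<Rightarrow> (nat \<times> nat) set \<Rightarrow> bool" where
  "strongly_connected n E \<longleftrightarrow>
     (\<forall>i<n. \<forall>j<n. i \<noteq> j \<longrightarrow> (i, j) \<in> E\<^sup>+)"

definition out_nbrs :: "(nat \<times> nat) set \<Rightarrow> nat \<Rightarrow> nat set" where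
  "out_nbrs E i = {j. (i, j) \<in> E}"

definition in_Adj :: "nat \<Rightarrow> (nat \<times> nat) set \<Rightarrow> (nat \<Rightarrow> nat \<Rightarrow> real) \<Rightarrow> bool" where
  "in_Adj n E A \<longleftrightarrow> (\<forall>i j. if (i, j) \<in> E then A i j > 0 else A i j = 0)"

definition imbalance :: "nat \<Rightarrow> (nat \<Rightarrow> nat \<Rightarrow> real) \<Rightarrow> nat \<Rightarrow> real" where
  "imbalance n A i = (\<Sum>j<n. A j i) - (\<Sum>j<n. A i j)"

definition weight_balanced :: "nat \<Rightarrow> (nat \<Rightarrow> nat \<Rightarrow> real) \<Rightarrow> bool" where
  "weight_balanced n A \<longleftrightarrow> (\<forall>i<n. imbalance n A i = 0)"

definition Omega_min :: "nat \<Rightarrow> (nat \<times> nat) set \<Rightarrow> (nat \<Rightarrow> nat \<Rightarrow> real) \<Rightarrow> nat \<Rightarrow> nat set" where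
  "Omega_min n E A i =
     {j \<in> out_nbrs E i. imbalance n A j = Min (imbalance n A ` out_nbrs E i)}"

text \<open>B arises from A by the mirror correction with choice function js (js i = j* for agent i).\<close>
definition imcor_step_with ::
  "nat \<Rightarrow> (nat \<times> nat) set \<Rightarrow> (nat \<Rightarrow> nat \<Rightarrow> real) \<Rightarrow> (nat \<Rightarrow> nat) \<Rightarrow> (nat \<Rightarrow> nat \<Rightarrow> real) \<Rightarrow> bool" where
  "imcor_step_with n E A js B \<longleftrightarrow>
     in_Adj n E B \<and>
     (\<forall>i<n. js i \<in> Omega_min n E A i) \<and>
     (\<forall>i<n. \<forall>j<n. B i j =
        (if 0 < imbalance n A i \<and> j = js i then A i j + imbalance n A i else A i j))"

definition g_imcor :: "nat \<Rightarrow> (nat \<times> nat) set \<Rightarrow> (nat \<Rightarrow> nat \<Rightarrow> real) \<Rightarrow> (nat \<Rightarrow> nat \<Rightarrow> real) set" where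
  "g_imcor n E A = {B. \<exists>js. imcor_step_with n E A js B}"

definition tie_time ::
  "nat \<Rightarrow> (nat \<times> nat) set \<Rightarrow> (nat \<Rightarrow> nat \<Rightarrow> nat \<Rightarrow> real) \<Rightarrow> nat \<Rightarrow> nat set \<Rightarrow> nat \<Rightarrow> bool" where
  "tie_time n E A i S k \<longleftrightarrow> 0 < imbalance n (A k) i \<and> Omega_min n E (A k) i = S"

text \<open>Fair-decision rule: whenever agent i faces the same tie set S (card S > 1) again,
  it picks an out-neighbour it has not picked yet for S; an earlier choice may only be
  repeated once all members of S have been chosen in between.\<close>
definition fair_decisions ::
  "nat \<Rightarrow> (nat \<times> nat) set \<Rightarrow> (nat \<Rightarrow> nat \<Rightarrow> nat \<Rightarrow> real) \<Rightarrow> (nat \<Rightarrow> nat \<Rightarrow> nat) \<Rightarrow> bool" where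
  "fair_decisions n E A c \<longleftrightarrow>
     (\<forall>i<n. \<forall>S. 1 < card S \<longrightarrow>
        (\<forall>k' k. k' < k \<and> tie_time n E A i S k' \<and> tie_time n E A i S k \<and> c k i = c k' i \<longrightarrow>
           S \<subseteq> {c m i | m. k' \<le> m \<and> m < k \<and> tie_time n E A i S m}))"

end

theory Submission
  imports Defs "HOL-Library.Infinite_Set"
begin

lemma step_formula:
  assumes E: "E \<subseteq> {..<n} \<times> {..<n}" and st: "imcor_step_with n E A js B" and i: "i < n"
  shows "imbalance n B i = imbalance n A i - (if 0 < imbalance n A i then imbalance n A i else 0)
     + (\<Sum>l<n. if 0 < imbalance n A l \<and> js l = i then imbalance n A l else 0)"
proof -
  have js: "js i < n" using st i E unfolding imcor_step_with_def Omega_min_def out_nbrs_def by blast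
  have B: "\<And>a b. a < n \<Longrightarrow> b < n \<Longrightarrow> B a b =
        (if 0 < imbalance n A a \<and> b = js a then A a b + imbalance n A a else A a b)"
    using st unfolding imcor_step_with_def by blast
  have in1: "(\<Sum>l<n. B l i) = (\<Sum>l<n. A l i + (if 0 < imbalance n A l \<and> js l = i then imbalance n A l else 0))"
    by (rule sum.cong) (auto simp: B i)
  have out1: "(\<Sum>j<n. B i j) = (\<Sum>j<n. A i j + (if j = js i then (if 0 < imbalance n A i then imbalance n A i else 0) else 0))"
    by (rule sum.cong) (auto simp: B i)
  have out2: "(\<Sum>j<n. B i j) = (\<Sum>j<n. A i j) + (if 0 < imbalance n A i then imbalance n A i else 0)"
    unfolding out1 sum.distrib using js by (simp add: sum.delta)
  show ?thesis
    unfolding imbalance_def[of n B i] in1 out2 sum.distrib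
    by (simp add: imbalance_def[of n A i])
qed

lemma sum_imbalance: "(\<Sum>i<n. imbalance n A i) = 0"
  unfolding imbalance_def sum_subtractf using sum.swap[of "\<lambda>i j. A j i" "{..<n}" "{..<n}"] by simp

lemma balanced_fix:
  assumes E: "E \<subseteq> {..<n} \<times> {..<n}" and st: "imcor_step_with n E A js B"
    and wb: "weight_balanced n A" and adj: "in_Adj n E A"
  shows "B = A"
proof (intro ext)
  fix i j
  show "B i j = A i j"
  proof (cases "i < n \<and> j < n")
    case True
    then show ?thesis using st wb unfolding imcor_step_with_def weight_balanced_def by auto
  next
    case False
    then have "(i, j) \<notin> E" using E by auto
    then show ?thesis using st adj unfolding imcor_step_with_def in_Adj_def by metis
  qed
qed

lemma antimono_const:
  fixes f :: "nat \<Rightarrow> nat"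
  assumes "\<And>k. f (Suc k) \<le> f k"
  shows "\<exists>T. \<forall>k\<ge>T. f k = f T"
proof -
  obtain T where T: "\<forall>y. f T \<le> f y" using ex_has_least_nat[of "\<lambda>_. True" _ f] by blast
  have "\<forall>k\<ge>T. f k = f T"
    using lift_Suc_antimono_le[of f] assms T by (metis le_antisym)
  then show ?thesis by blast
qed

theorem theorem4p7:
  fixes n :: nat and E :: "(nat \<times> nat) set"
    and A :: "nat \<Rightarrow> nat \<Rightarrow> nat \<Rightarrow> real" and c :: "nat \<Rightarrow> nat \<Rightarrow> nat"
  assumes "E \<subseteq> {..<n} \<times> {..<n}"
    and "strongly_connected n E"
    and "in_Adj n E (A 0)"
    and "\<forall>k. imcor_step_with n E (A k) (c k) (A (Suc k))"
    and "fair_decisions n E A c"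
  shows "\<exists>K. weight_balanced n (A K) \<and> (\<forall>k\<ge>K. A k = A K)"
proof -
  note E = assms(1) and sc = assms(2) and st = assms(4) and fair = assms(5)
  define w where "w k i = imbalance n (A k) i" for k i
  define P where "P k = {i. i < n \<and> 0 < w k i}" for k
  define N where "N k = {i. i < n \<and> w k i < 0}" for k
  have adj: "in_Adj n E (A k)" for k
    using assms(3) st by (cases k) (auto simp: imcor_step_with_def)
  have cr: "c k i \<in> Omega_min n E (A k) i" if "i < n" for k i
    using st that unfolding imcor_step_with_def by blast
  have cE: "(i, c k i) \<in> E" if "i < n" for k i
    using cr[OF that, of k] by (simp add: Omega_min_def out_nbrs_def)
  have cn: "c k i < n" if "i < n" for k i using cE[OF that, of k] E by (auto simp: subset_iff)
  have onf: "finite (out_nbrs E j)" for j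
    by (rule finite_subset[of _ "{..<n}"]) (use E in \<open>auto simp: out_nbrs_def\<close>)
  define sm where "sm k i = (\<Sum>l<n. if 0 < w k l \<and> c k l = i then w k l else 0)" for k i
  have form: "w (Suc k) i = w k i - (if 0 < w k i then w k i else 0) + sm k i" if "i < n" for k i
    unfolding w_def sm_def using step_formula[OF E st[rule_format, of k] that] .
  have sumnn: "0 \<le> sm k i" for k i
    unfolding sm_def by (intro sum_nonneg) auto
  have nonneg: "0 \<le> w (Suc k) i" if "i < n" "0 \<le> w k i" for k i
    using form[OF that(1), of k] sumnn[of k i] that(2) by (auto split: if_splits)
  have Nsub: "N (Suc k) \<subseteq> N k" for k
  proof
    fix i assume "i \<in> N (Suc k)"
    then have i: "i < n" "w (Suc k) i < 0" unfolding N_def by auto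
    then have "w k i < 0" using nonneg[of i k] by linarith
    then show "i \<in> N k" using i(1) unfolding N_def by simp
  qed
  have Psub: "P (Suc k) \<subseteq> c k ` P k" for k
  proof
    fix i assume "i \<in> P (Suc k)"
    then have i: "i < n" "0 < w (Suc k) i" unfolding P_def by auto
    show "i \<in> c k ` P k"
    proof (rule ccontr)
      assume "i \<notin> c k ` P k"
      then have "sm k i = 0" unfolding sm_def
        by (intro sum.neutral) (auto simp: P_def)
      then show False using form[OF i(1), of k] i(2) by (auto split: if_splits)
    qed
  qed
  have hit: "c k l \<in> P (Suc k)" if "l \<in> P k" "0 \<le> w k (c k l)" for k l
  proof -
    have l: "l < n" "0 < w k l" using that(1) unfolding P_def by auto
    have "w k l \<le> sm k (c k l)" unfolding sm_def
      using member_le_sum[of l "{..<n}" "\<lambda>l'. if 0 < w k l' \<and> c k l' = c k l then w k l' else 0"] l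
      by auto
    then have "0 < w (Suc k) (c k l)" using form[OF cn[OF l(1)], of k] that(2) l(2)
      by (auto split: if_splits)
    then show ?thesis unfolding P_def using cn[OF l(1)] by auto
  qed
  have finP: "finite (P k)" for k unfolding P_def by auto
  have finN: "finite (N k)" for k unfolding N_def by auto
  have cardP: "card (P (Suc k)) \<le> card (P k)" for k
    using card_mono[OF finite_imageI[OF finP] Psub[of k]] card_image_le[OF finP[of k], of "c k"] by linarith
  have cardN: "card (N (Suc k)) \<le> card (N k)" for k
    using card_mono[OF finN Nsub] by blast
  obtain T1 where T1: "\<forall>k\<ge>T1. card (N k) = card (N T1)"
    using antimono_const[of "\<lambda>k. card (N k)"] cardN by blast
  obtain T2 where T2: "\<forall>k\<ge>T2. card (P k) = card (P T2)"
    using antimono_const[of "\<lambda>k. card (P k)"] cardP by blast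
  define T where "T = max T1 T2"
  have Neq: "N (Suc k) = N k" if "k \<ge> T" for k
    using card_subset_eq[OF finN Nsub, of k] T1 that unfolding T_def
    by (metis le_SucI max.boundedE)
  have Peq: "card (P (Suc k)) = card (P k)" if "k \<ge> T" for k
    using T2 that unfolding T_def by (metis le_SucI max.boundedE)
  have noN: "c k l \<notin> N k" if "k \<ge> T" "l \<in> P k" for k l
  proof
    assume iN: "c k l \<in> N k"
    then have "c k l \<in> N (Suc k)" using Neq[OF that(1)] by simp
    then have "c k l \<notin> P (Suc k)" unfolding N_def P_def by auto
    then have "P (Suc k) \<subseteq> c k ` P k - {c k l}" using Psub[of k] by blast
    then have "card (P (Suc k)) \<le> card (c k ` P k - {c k l})"
      by (intro card_mono) (auto simp: finP)
    also have "\<dots> = card (c k ` P k) - 1"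
      using that(2) finP by (simp add: card_Diff_singleton)
    also have "\<dots> < card (P k)"
    proof -
      have "0 < card (P k)" using that(2) finP[of k] card_gt_0_iff by blast
      then show ?thesis using card_image_le[OF finP[of k], of "c k"] by linarith
    qed
    finally show False using Peq[OF that(1)] by simp
  qed
  have nbr_nonneg: "0 \<le> w k i" if "k \<ge> T" "j \<in> P k" "(j, i) \<in> E" for k j i
  proof (rule ccontr)
    assume neg: "\<not> 0 \<le> w k i"
    have j: "j < n" using that(2) unfolding P_def by auto
    have "w k (c k j) = Min (w k ` out_nbrs E j)"
      using cr[OF j, of k] unfolding Omega_min_def w_def by auto
    also have "\<dots> \<le> w k i"
      using onf that(3) by (intro Min_le) (auto simp: out_nbrs_def)
    finally have "c k j \<in> N k" using neg cn[OF j] unfolding N_def by auto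
    then show False using noN[OF that(1,2)] by blast
  qed
  show ?thesis
  proof (cases "\<exists>k\<ge>T. P k = {}")
    case True
    then obtain K where K: "P K = {}" by blast
    have np: "\<not> 0 < w K i" if "i < n" for i using K that unfolding P_def by blast
    have le0: "\<forall>i\<in>{..<n}. 0 \<le> - w K i" using np by (simp add: not_less)
    have "(\<Sum>i<n. - w K i) = 0" using sum_imbalance[of n "A K"]
      by (simp add: w_def sum_negf)
    then have "\<forall>i\<in>{..<n}. - w K i = 0"
      using sum_nonneg_eq_0_iff[of "{..<n}" "\<lambda>i. - w K i"] le0 by blast
    then have wb: "weight_balanced n (A K)" unfolding weight_balanced_def w_def by auto
    have "A (K + m) = A K" for m
    proof (induction m)
      case 0 then show ?case by simp
    next
      case (Suc m)
      have "A (Suc (K + m)) = A (K + m)"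
        using balanced_fix[OF E st[rule_format, of "K + m"]] wb adj Suc by simp
      then show ?case using Suc by simp
    qed
    then have "\<forall>k\<ge>K. A k = A K" by (metis le_add_diff_inverse)
    then show ?thesis using wb by blast
  next
    case False
    then have Pne: "P k \<noteq> {}" if "k \<ge> T" for k using that by blast
    obtain j0 where j0: "j0 \<in> P T" using Pne[of T] by auto
    obtain u where u: "u \<in> N T"
    proof (rule ccontr)
      assume "\<not> thesis"
      with that have nn: "\<forall>i\<in>{..<n}. 0 \<le> w T i" unfolding N_def by force
      have "(\<Sum>i<n. w T i) = 0" using sum_imbalance[of n "A T"] by (simp add: w_def)
      then have "\<forall>i\<in>{..<n}. w T i = 0" using sum_nonneg_eq_0_iff[of "{..<n}" "w T"] nn by blast
      then show False using j0 unfolding P_def by auto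
    qed
    have uN: "u \<in> N k" if "k \<ge> T" for k
      using that
    proof (induction k rule: dec_induct)
      case base then show ?case using u .
    next
      case (step k) then show ?case using Neq by blast
    qed
    define R where "R = {j. j < n \<and> (\<forall>T'. \<exists>k\<ge>T'. j \<in> P k)}"
    have Rne: "R \<noteq> {}"
    proof
      assume Re: "R = {}"
      have "\<forall>j\<in>{..<n}. \<exists>T'. \<forall>k\<ge>T'. j \<notin> P k"
        using Re unfolding R_def by auto
      then obtain f where f: "\<forall>j\<in>{..<n}. \<forall>k\<ge>f j. j \<notin> P k" by metis
      define k0 where "k0 = T + (\<Sum>j<n. f j)"
      have "P k0 = {}"
      proof (rule equals0I)
        fix j assume jP: "j \<in> P k0"
        then have jn: "j < n" unfolding P_def by auto
        have "f j \<le> (\<Sum>j<n. f j)" using jn by (intro member_le_sum) auto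
        then have "k0 \<ge> f j" unfolding k0_def by simp
        then show False using f jn jP by auto
      qed
      then show False using Pne[of k0] unfolding k0_def by simp
    qed
    have closure: "i \<in> R" if jR: "j \<in> R" and ji: "(j, i) \<in> E" for j i
    proof (rule ccontr)
      assume "i \<notin> R"
      have i: "i < n" using ji E by auto
      have jn: "j < n" using jR unfolding R_def by auto
      obtain T3 where T3: "\<forall>k\<ge>T3. i \<notin> P k" using \<open>i \<notin> R\<close> i unfolding R_def by auto
      define T4 where "T4 = max T T3"
      have nohit: "c m j \<noteq> i" if "m \<ge> T4" "j \<in> P m" for m
      proof
        assume eq: "c m j = i"
        have "0 \<le> w m i" using nbr_nonneg[of m j i] that ji unfolding T4_def by auto
        then have "i \<in> P (Suc m)" using hit[OF that(2)] eq by simp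
        then show False using T3 that unfolding T4_def by auto
      qed
      have inOm: "i \<in> Omega_min n E (A k) j" if "k \<ge> T4" "j \<in> P k" for k
      proof -
        have nn: "\<forall>x\<in>out_nbrs E j. 0 \<le> w k x"
          using nbr_nonneg[of k j] that unfolding T4_def out_nbrs_def by auto
        have wi: "w k i = 0" using nn ji T3 that i unfolding T4_def P_def out_nbrs_def by force
        have ne: "out_nbrs E j \<noteq> {}" using ji unfolding out_nbrs_def by auto
        have "Min (w k ` out_nbrs E j) = 0"
        proof (rule antisym)
          show "Min (w k ` out_nbrs E j) \<le> 0"
            using wi onf ji by (metis Min_le finite_imageI image_eqI mem_Collect_eq out_nbrs_def)
          show "0 \<le> Min (w k ` out_nbrs E j)"
            using nn onf ne by (simp add: Min_ge_iff)
        qed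
        then show ?thesis using wi ji unfolding Omega_min_def out_nbrs_def w_def by auto
      qed
      define K1 where "K1 = {k. k \<ge> T4 \<and> j \<in> P k}"
      have infK1: "infinite K1"
        unfolding infinite_nat_iff_unbounded_le K1_def
      proof
        fix m
        obtain k where "k \<ge> max m T4" "j \<in> P k" using jR unfolding R_def by blast
        then show "\<exists>k\<ge>m. k \<in> {k. T4 \<le> k \<and> j \<in> P k}" by auto
      qed
      have OmS: "Omega_min n E (A k) j \<subseteq> {..<n}" for k
        using E unfolding Omega_min_def out_nbrs_def by auto
      have "finite ((\<lambda>k. Omega_min n E (A k) j) ` K1)"
        by (rule finite_subset[of _ "Pow {..<n}"]) (use OmS in auto)
      then obtain a0 where a0: "a0 \<in> K1" and infK2: "infinite {k \<in> K1. Omega_min n E (A k) j = Omega_min n E (A a0) j}"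
        using pigeonhole_infinite[OF infK1] by blast
      define S where "S = Omega_min n E (A a0) j"
      define K2 where "K2 = {k \<in> K1. Omega_min n E (A k) j = S}"
      have iS: "i \<in> S" using inOm a0 unfolding S_def K1_def by auto
      have finS: "finite S" using OmS[of a0] unfolding S_def by (rule finite_subset) auto
      show False
      proof (cases "1 < card S")
        case False
        then have "card S \<le> Suc 0" by simp
        then have "c a0 j = i" using card_le_Suc0_iff_eq[OF finS] iS cr[OF jn, of a0]
          unfolding S_def by blast
        then show False using nohit a0 unfolding K1_def by auto
      next
        case True
        have infK2': "infinite K2" using infK2 unfolding K2_def S_def .
        have "finite ((\<lambda>k. c k j) ` K2)"
          by (rule finite_subset[OF _ finS]) (use cr[OF jn] in \<open>auto simp: K2_def\<close>)
        then obtain b0 where b0: "b0 \<in> K2" and infK3: "infinite {k \<in> K2. c k j = c b0 j}"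
          using pigeonhole_infinite[OF infK2'] by blast
        obtain k where k: "k \<ge> Suc b0" "k \<in> {k \<in> K2. c k j = c b0 j}"
          using infK3 unfolding infinite_nat_iff_unbounded_le by blast
        have tt: "tie_time n E A j S m" if "m \<in> K2" for m
          using that unfolding tie_time_def K2_def K1_def P_def w_def by auto
        have "S \<subseteq> {c m j | m. b0 \<le> m \<and> m < k \<and> tie_time n E A j S m}"
          using fair jn True tt[OF b0] k unfolding fair_decisions_def
          by (metis (mono_tags, lifting) Suc_le_eq mem_Collect_eq tt)
        then obtain m where m: "b0 \<le> m" "tie_time n E A j S m" "c m j = i" using iS by blast
        have "m \<ge> T4" using m(1) b0 unfolding K2_def K1_def by auto
        moreover have "j \<in> P m" using m(2) jn unfolding tie_time_def P_def w_def by auto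
        ultimately show False using nohit m(3) by blast
      qed
    qed
    obtain j where jR: "j \<in> R" using Rne by blast
    have path: "v \<in> R" if "(j, v) \<in> E\<^sup>+" for v
      using that
    proof (induction rule: trancl_induct)
      case (base y) then show ?case using closure jR by blast
    next
      case (step y z) then show ?case using closure by blast
    qed
    have un: "u < n" using u unfolding N_def by auto
    have jn: "j < n" using jR unfolding R_def by auto
    have "u \<in> R"
    proof (cases "u = j")
      case True then show ?thesis using jR by simp
    next
      case False then show ?thesis using path sc un jn unfolding strongly_connected_def by blast
    qed
    then obtain k where "k \<ge> T" "u \<in> P k" unfolding R_def by blast
    then have False using uN[of k] unfolding P_def N_def by auto
    then show ?thesis by simp
  qed
qed

end
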